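(* Let $\mathrm P$ be a probability measure on $\mathbb{R}^d$ with Lebesgue density $p$ supported on the open convex set $\mathcal X\subseteq\mathbb{R}^d$, with $p$ satisfying Assumption A. Then for every $\mathbf u\in\mathbb S_{d-1}$ and every sequence of reals $t_n\to\infty$ (such that $\varphi$ is differentiable at each $t_n\mathbf u$, so that $\mathbf F_\pm(t_n\mathbf u)=\nabla\varphi(t_n\mathbf u)$ is defined), $\lim_{n\to\infty}\mathbf F_\pm(t_n\mathbf u)=\mathbf u$.
   Context: $\mathbb{B}_d$ is the open unit ball of $\mathbb{R}^d$ and $\mathbb S_{d-1}$ the unit sphere. $\mathrm U_d$ is the spherical uniform distribution on $\mathbb B_d$ (density $u_d(\mathbf x)=\frac{1}{a_d|\mathbf x|^{d-1}}$ on $\mathbb B_d\setminus\{\mathbf 0\}$, $a_d=2\pi^{d/2}/\Gamma(d/2)$). $\psi$ is the convex lsc function on $\mathbb B_d$, normalized by $\psi(\mathbf 0)=0$, whose a.e. gradient pushes $\mathrm U_d$ forward to $\mathrm P$ (McCann), and $\varphi(\mathbf x)=\sup_{\mathbf u\in\mathbb B_d}(\langle\mathbf u,\mathbf x\rangle-\psi(\mathbf u))$, $\mathbf x\in\mathbb{R}^d$; the center-outward distribution function is $\mathbf F_\pm=\nabla\varphi$. Assumption A: for every $R>0$ there exist $0<\lambda_R\le\Lambda_R$ with $\lambda_R\le p(\mathbf x)\le\Lambda_R$ for all $\mathbf x\in\mathcal X$ with $|\mathbf x|<R$. *)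

theory Defs
  imports "HOL-Probability.Probability"
begin

definition sphere_area :: "nat \<Rightarrow> real" where
  "sphere_area d = 2 * pi powr (real d / 2) / Gamma (real d / 2)"

definition spherical_uniform :: "'a::euclidean_space measure" where
  "spherical_uniform = density lborel
     (\<lambda>x. ennreal (indicator (ball 0 1 - {0}) x
        / (sphere_area DIM('a) * norm x ^ (DIM('a) - 1))))"

text \<open>Gradient of f at x (meaningful where f is differentiable at x).\<close>
definition grad :: "('a::euclidean_space \<Rightarrow> real) \<Rightarrow> 'a \<Rightarrow> 'a" where
  "grad f x = (SOME v. (f has_derivative (\<lambda>h. v \<bullet> h)) (at x))"

definition conj_ball :: "('a::euclidean_space \<Rightarrow> real) \<Rightarrow> 'a \<Rightarrow> real" where
  "conj_ball \<psi> x = (SUP u\<in>ball 0 1. u \<bullet> x - \<psi> u)"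

text \<open>McCann potential: psi convex (hence continuous, so lsc) on the open unit ball,
  psi(0) = 0, and the a.e. gradient of psi pushes U_d forward to P.\<close>
definition mccann_potential :: "'a::euclidean_space measure \<Rightarrow> ('a \<Rightarrow> real) \<Rightarrow> bool" where
  "mccann_potential P \<psi> \<longleftrightarrow>
     convex_on (ball 0 1) \<psi> \<and> \<psi> 0 = 0 \<and>
     (AE u in spherical_uniform. \<psi> differentiable (at u)) \<and>
     grad \<psi> \<in> borel_measurable spherical_uniform \<and>
     distr spherical_uniform borel (grad \<psi>) = P"

definition center_outward_F :: "('a::euclidean_space \<Rightarrow> real) \<Rightarrow> 'a \<Rightarrow> 'a" where
  "center_outward_F \<psi> x = grad (conj_ball \<psi>) x"

definition assumption_A :: "('a::euclidean_space \<Rightarrow> real) \<Rightarrow> 'a set \<Rightarrow> bool" where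
  "assumption_A p X \<longleftrightarrow> (\<forall>R>0. \<exists>lam Lam. 0 < lam \<and> lam \<le> Lam \<and>
      (\<forall>x\<in>X. norm x < R \<longrightarrow> lam \<le> p x \<and> p x \<le> Lam))"

end

theory Submission imports Defs begin
lemma lin_rep: fixes f :: "'a::euclidean_space \<Rightarrow> real" assumes "linear f"
  shows "\<exists>v. f = (\<lambda>h. v \<bullet> h)"
proof
  show "f = (\<lambda>h. (\<Sum>b\<in>Basis. f b *\<^sub>R b) \<bullet> h)"
  proof
    fix h
    have "f h = f (\<Sum>b\<in>Basis. (h \<bullet> b) *\<^sub>R b)" by (simp add: euclidean_representation)
    also have "\<dots> = (\<Sum>b\<in>Basis. (h \<bullet> b) * f b)"
      using assms by (simp add: linear_sum linear_scale)
    also have "\<dots> = (\<Sum>b\<in>Basis. f b *\<^sub>R b) \<bullet> h"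
      by (simp add: inner_sum_right inner_commute mult.commute)
    finally show "f h = (\<Sum>b\<in>Basis. f b *\<^sub>R b) \<bullet> h" .
  qed
qed

lemma grad_works: fixes f :: "'a::euclidean_space \<Rightarrow> real"
  assumes "f differentiable (at x)"
  shows "(f has_derivative (\<lambda>h. grad f x \<bullet> h)) (at x)"
proof -
  obtain D where D: "(f has_derivative D) (at x)" using assms by (auto simp: differentiable_def)
  then obtain v where "D = (\<lambda>h. v \<bullet> h)" using lin_rep has_derivative_linear by blast
  then have "\<exists>v. (f has_derivative (\<lambda>h. v \<bullet> h)) (at x)" using D by blast
  then show ?thesis unfolding grad_def by (rule someI_ex)
qed

lemma dir_bound: fixes f :: "'a::euclidean_space \<Rightarrow> real"
  assumes d: "(f has_derivative (\<lambda>h. g \<bullet> h)) (at x)"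
    and b: "\<And>s. 0 < s \<Longrightarrow> s \<le> 1 \<Longrightarrow> f (x + s *\<^sub>R h) - f x \<le> s * C"
  shows "g \<bullet> h \<le> C"
proof -
  have l: "((\<lambda>s. x + s *\<^sub>R h) has_derivative (\<lambda>s. s *\<^sub>R h)) (at 0)"
    by (auto intro!: derivative_eq_intros)
  have "((\<lambda>s. f (x + s *\<^sub>R h)) has_derivative (\<lambda>s. g \<bullet> (s *\<^sub>R h))) (at 0)"
    using has_derivative_compose[OF l, of f "\<lambda>h. g \<bullet> h"] d by simp
  then have "((\<lambda>s. f (x + s *\<^sub>R h)) has_field_derivative (g \<bullet> h)) (at 0)"
    unfolding has_field_derivative_def by (rule has_derivative_eq_rhs) (auto simp: fun_eq_iff)
  then have "((\<lambda>s. f (x + s *\<^sub>R h)) has_field_derivative (g \<bullet> h)) (at 0 within {0<..})"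
    by (rule has_field_derivative_at_within)
  then have lim: "((\<lambda>s. (f (x + s *\<^sub>R h) - f (x + 0 *\<^sub>R h)) / (s - 0)) \<longlongrightarrow> g \<bullet> h) (at_right 0)"
    by (simp add: has_field_derivative_iff)
  have ev: "eventually (\<lambda>s. (f (x + s *\<^sub>R h) - f (x + 0 *\<^sub>R h)) / (s - 0) \<le> C) (at_right 0)"
  proof -
    have "eventually (\<lambda>s. s < 1) (at_right (0::real))"
      unfolding eventually_at_right_field by (intro exI[of _ 1]) auto
    moreover have "eventually (\<lambda>s. s > 0) (at_right (0::real))"
      by (simp add: eventually_at_right_less)
    ultimately show ?thesis
    proof eventually_elim
      case (elim s)
      then show ?case using b[of s] by (simp add: divide_le_eq mult.commute)
    qed
  qed
  show ?thesis by (rule tendsto_upperbound[OF lim ev]) simp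
qed
theorem corollary3p2:
  fixes p :: "'a::euclidean_space \<Rightarrow> real" and X :: "'a set"
    and \<psi> :: "'a \<Rightarrow> real" and u :: 'a and t :: "nat \<Rightarrow> real"
  assumes p_meas: "p \<in> borel_measurable borel"
    and p_nonneg: "\<And>x. 0 \<le> p x"
    and P_prob: "prob_space (density lborel (\<lambda>x. ennreal (p x)))"
    and X_open: "open X" and X_convex: "convex X"
    and p_supp: "\<And>x. x \<notin> X \<Longrightarrow> p x = 0"
    and A: "assumption_A p X"
    and psi: "mccann_potential (density lborel (\<lambda>x. ennreal (p x))) \<psi>"
    and u: "u \<in> sphere 0 1"
    and t: "filterlim t at_top sequentially"
    and diff: "\<And>n. conj_ball \<psi> differentiable (at (t n *\<^sub>R u))"
  shows "(\<lambda>n. center_outward_F \<psi> (t n *\<^sub>R u)) \<longlonglongrightarrow> u"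
proof -
  define \<phi> where "\<phi> = conj_ball \<psi>"
  have cvx: "convex_on (ball 0 1) \<psi>" and psi0: "\<psi> 0 = 0"
    using psi by (auto simp: mccann_potential_def)
  have cont: "continuous_on (ball 0 1) \<psi>"
    by (rule convex_on_continuous[OF open_ball cvx])
  have "compact (\<psi> ` cball 0 (1/2))"
    by (rule compact_continuous_image[OF continuous_on_subset[OF cont]]) auto
  then obtain M where M: "\<And>w. w \<in> cball 0 (1/2) \<Longrightarrow> \<bar>\<psi> w\<bar> \<le> M"
  proof -
    from compact_imp_bounded[OF \<open>compact (\<psi> ` cball 0 (1/2))\<close>]
    obtain M where "\<forall>x\<in>\<psi> ` cball 0 (1/2). \<bar>x\<bar> \<le> M" by (auto simp: bounded_real)
    then show ?thesis by (intro that[of M]) auto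
  qed
  have lowb: "\<psi> v \<ge> - 2 * M" if v: "v \<in> ball 0 1" for v
  proof -
    have w: "- (1/2) *\<^sub>R v \<in> ball 0 1" "- (1/2) *\<^sub>R v \<in> cball 0 (1/2)" using v by auto
    have "\<psi> ((1 - 2/3) *\<^sub>R v + (2/3) *\<^sub>R (- (1/2) *\<^sub>R v)) \<le> (1 - 2/3) * \<psi> v + (2/3) * \<psi> (- (1/2) *\<^sub>R v)"
      by (rule convex_onD[OF cvx]) (use v w in auto)
    moreover have "(1 - 2/3) *\<^sub>R v + (2/3) *\<^sub>R (- (1/2) *\<^sub>R v) = (0::'a)"
      by (simp add: algebra_simps)
    ultimately have "0 \<le> (1/3) * \<psi> v + (2/3) * \<psi> (- (1/2) *\<^sub>R v)" using psi0 by simp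
    moreover have "\<psi> (- (1/2) *\<^sub>R v) \<le> M" using M[OF w(2)] by simp
    ultimately show ?thesis by simp
  qed
  have bdd: "bdd_above ((\<lambda>v. v \<bullet> x - \<psi> v) ` ball 0 1)" for x
  proof (rule bdd_aboveI2)
    fix v :: 'a assume v: "v \<in> ball 0 1"
    have "v \<bullet> x \<le> norm v * norm x" by (rule norm_cauchy_schwarz)
    also have "\<dots> \<le> norm x" using v by (simp add: mult_left_le_one_le)
    finally show "v \<bullet> x - \<psi> v \<le> norm x + 2 * M" using lowb[OF v] by simp
  qed
  have ne: "ball (0::'a) 1 \<noteq> {}" by simp
  have upper: "v \<bullet> x - \<psi> v \<le> \<phi> x" if "v \<in> ball 0 1" for v x
    unfolding \<phi>_def conj_ball_def by (rule cSUP_upper[OF that bdd])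
  have lip: "\<phi> y \<le> \<phi> x + norm (y - x)" for x y
    unfolding \<phi>_def conj_ball_def
  proof (rule cSUP_least[OF ne])
    fix v :: 'a assume v: "v \<in> ball 0 1"
    have "v \<bullet> (y - x) \<le> norm v * norm (y - x)" by (rule norm_cauchy_schwarz)
    also have "\<dots> \<le> norm (y - x)" using v by (simp add: mult_left_le_one_le)
    finally have "v \<bullet> y - \<psi> v \<le> (v \<bullet> x - \<psi> v) + norm (y - x)" by (simp add: inner_diff_right)
    also have "\<dots> \<le> conj_ball \<psi> x + norm (y - x)" using upper[OF v, of x] by (simp add: \<phi>_def)
    finally show "v \<bullet> y - \<psi> v \<le> (SUP u\<in>ball 0 1. u \<bullet> x - \<psi> u) + norm (y - x)"
      by (simp add: conj_ball_def)
  qed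
  have cvxphi: "\<phi> ((1 - s) *\<^sub>R x) \<le> (1 - s) * \<phi> x + s * \<phi> 0" if s: "0 \<le> s" "s \<le> 1" for s x
    unfolding \<phi>_def conj_ball_def
  proof (rule cSUP_least[OF ne])
    fix v :: 'a assume v: "v \<in> ball 0 1"
    have "v \<bullet> ((1 - s) *\<^sub>R x) - \<psi> v = (1 - s) * (v \<bullet> x - \<psi> v) + s * (v \<bullet> 0 - \<psi> v)"
      by (simp add: algebra_simps)
    also have "\<dots> \<le> (1 - s) * \<phi> x + s * \<phi> 0"
      using upper[OF v, of x] upper[OF v, of 0] s
      by (intro add_mono mult_left_mono) auto
    finally show "v \<bullet> ((1 - s) *\<^sub>R x) - \<psi> v \<le> (1 - s) * (SUP u\<in>ball 0 1. u \<bullet> x - \<psi> u) + s * (SUP u\<in>ball 0 1. u \<bullet> 0 - \<psi> u)"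
      by (simp add: \<phi>_def conj_ball_def)
  qed
  define g where "g n = center_outward_F \<psi> (t n *\<^sub>R u)" for n
  have der: "(\<phi> has_derivative (\<lambda>h. g n \<bullet> h)) (at (t n *\<^sub>R u))" for n
    unfolding g_def center_outward_F_def \<phi>_def by (rule grad_works[OF diff])
  have gnorm: "norm (g n) \<le> 1" for n
  proof -
    have "g n \<bullet> g n \<le> norm (g n)"
    proof (rule dir_bound[OF der])
      fix s :: real assume s: "0 < s" "s \<le> 1"
      show "\<phi> (t n *\<^sub>R u + s *\<^sub>R g n) - \<phi> (t n *\<^sub>R u) \<le> s * norm (g n)"
        using lip[of "t n *\<^sub>R u + s *\<^sub>R g n" "t n *\<^sub>R u"] s by simp
    qed
    then have "norm (g n) ^ 2 \<le> norm (g n)" by (simp add: power2_norm_eq_inner)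
    show ?thesis
    proof (rule ccontr)
      assume "\<not> norm (g n) \<le> 1"
      then have "norm (g n) * 1 < norm (g n) * norm (g n)"
        by (intro mult_strict_left_mono) auto
      then show False using \<open>norm (g n) ^ 2 \<le> norm (g n)\<close> by (simp add: power2_eq_square)
    qed
  qed
  have tang: "t n * (g n \<bullet> u) \<ge> \<phi> (t n *\<^sub>R u) - \<phi> 0" for n
  proof -
    have "g n \<bullet> (- (t n *\<^sub>R u)) \<le> \<phi> 0 - \<phi> (t n *\<^sub>R u)"
    proof (rule dir_bound[OF der])
      fix s :: real assume s: "0 < s" "s \<le> 1"
      have "t n *\<^sub>R u + s *\<^sub>R - (t n *\<^sub>R u) = (1 - s) *\<^sub>R (t n *\<^sub>R u)" by (simp add: algebra_simps)
      then show "\<phi> (t n *\<^sub>R u + s *\<^sub>R - (t n *\<^sub>R u)) - \<phi> (t n *\<^sub>R u) \<le> s * (\<phi> 0 - \<phi> (t n *\<^sub>R u))"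
        using cvxphi[of s "t n *\<^sub>R u"] s by (simp add: algebra_simps)
    qed
    then show ?thesis by simp
  qed
  have un: "norm u = 1" using u by simp
  show ?thesis
  proof (rule LIMSEQ_I)
    fix e :: real assume e: "0 < e"
    define \<epsilon> where "\<epsilon> = min (1/2) (e^2 / 8)"
    have \<epsilon>: "0 < \<epsilon>" "\<epsilon> \<le> 1/2" "\<epsilon> \<le> e^2/8" using e by (auto simp: \<epsilon>_def)
    define v where "v = (1 - \<epsilon>) *\<^sub>R u"
    have v: "v \<in> ball 0 1" using \<epsilon> un by (simp add: v_def)
    define K where "K = max 1 ((\<bar>\<psi> v\<bar> + \<bar>\<phi> 0\<bar>) / \<epsilon>)"
    have K: "K > 0" "(\<bar>\<psi> v\<bar> + \<bar>\<phi> 0\<bar>) / \<epsilon> \<le> K" by (auto simp: K_def)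
    from t have "eventually (\<lambda>n. t n \<ge> K) sequentially" by (simp add: filterlim_at_top)
    then obtain N where N: "\<And>n. n \<ge> N \<Longrightarrow> t n \<ge> K" by (auto simp: eventually_sequentially)
    have "norm (g n - u) < e" if n: "n \<ge> N" for n
    proof -
      have tn: "t n \<ge> K" "t n > 0" using N[OF n] K by auto
      have "v \<bullet> (t n *\<^sub>R u) - \<psi> v \<le> \<phi> (t n *\<^sub>R u)" by (rule upper[OF v])
      moreover have "v \<bullet> (t n *\<^sub>R u) = (1 - \<epsilon>) * t n" using un by (simp add: v_def inner_commute power2_norm_eq_inner[symmetric])
      ultimately have "t n * (g n \<bullet> u) \<ge> (1 - \<epsilon>) * t n - \<psi> v - \<phi> 0" using tang[of n] by linarith
      moreover have "\<bar>\<psi> v\<bar> + \<bar>\<phi> 0\<bar> \<le> \<epsilon> * t n" proof -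
        have "\<bar>\<psi> v\<bar> + \<bar>\<phi> 0\<bar> \<le> K * \<epsilon>" using K(2) \<epsilon>(1) by (simp add: divide_le_eq)
        also have "\<dots> \<le> t n * \<epsilon>" using tn \<epsilon>(1) by (intro mult_right_mono) auto
        finally show ?thesis by (simp add: mult.commute)
      qed
      moreover have "- \<psi> v - \<phi> 0 \<ge> - (\<bar>\<psi> v\<bar> + \<bar>\<phi> 0\<bar>)" by linarith
      moreover have "t n * (1 - 2 * \<epsilon>) = (1 - \<epsilon>) * t n - \<epsilon> * t n" by (simp add: algebra_simps)
      ultimately have "t n * (g n \<bullet> u) \<ge> t n * (1 - 2 * \<epsilon>)" by linarith
      then have gu: "g n \<bullet> u \<ge> 1 - 2 * \<epsilon>" using tn by simp
      have "norm (g n - u) ^ 2 = norm (g n) ^ 2 - 2 * (g n \<bullet> u) + norm u ^ 2"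
        by (simp add: power2_norm_eq_inner inner_diff_left inner_diff_right inner_commute)
      also have "\<dots> \<le> 1 - 2 * (g n \<bullet> u) + 1"
        using gnorm[of n] un by (simp add: power_le_one)
      also have "\<dots> \<le> 4 * \<epsilon>" using gu by simp
      also have "\<dots> < e ^ 2" using \<epsilon> e by simp
      finally show ?thesis using e by (simp add: power_less_imp_less_base)
    qed
    then show "\<exists>N. \<forall>n\<ge>N. norm (center_outward_F \<psi> (t n *\<^sub>R u) - u) < e" by (auto simp: g_def)
  qed
qed

end
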